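(* Let $a,b$ be fixed nonzero complex constants, let $\{a_i\},\{b_i\},\{c_i\},\{d_i\}$ ($i\in\mathbb{Z}$) be complex sequences of nonzero numbers, and let $m,n\ge0$ be integers such that for $-n\le j\le m$ the quantities $(a_j+c_j)(a_j+\frac{b}{ac_j})$, $(a_j+d_j)(a_j+\frac{b}{ad_j})$, $(b_j-c_j)(1-\frac{b}{ab_jc_j})$, $(b_j-d_j)(1-\frac{b}{ab_jd_j})$ are nonzero. Then $$\sum_{k=-n}^{m}(a_k+b_k)\Big(a_k+\frac{b}{ab_k}\Big)(c_k-d_k)\Big(1-\frac{b}{ac_kd_k}\Big)\frac{\prod_{j=1}^{k-1}(a_j+c_j)(a_j+\frac{b}{ac_j})}{\prod_{j=1}^{k}(a_j+d_j)(a_j+\frac{b}{ad_j})}\frac{\prod_{j=1}^{k-1}(b_j-d_j)(1-\frac{b}{ab_jd_j})}{\prod_{j=1}^{k}(b_j-c_j)(1-\frac{b}{ab_jc_j})}$$ $$=\frac{\prod_{j=1}^{m}(a_j+c_j)(a_j+\frac{b}{ac_j})}{\prod_{j=1}^{m}(a_j+d_j)(a_j+\frac{b}{ad_j})}\frac{\prod_{j=1}^{m}(b_j-d_j)(1-\frac{b}{ab_jd_j})}{\prod_{j=1}^{m}(b_j-c_j)(1-\frac{b}{ab_jc_j})}-\frac{\prod_{j=-n}^{0}(a_j+d_j)(a_j+\frac{b}{ad_j})}{\prod_{j=-n}^{0}(a_j+c_j)(a_j+\frac{b}{ac_j})}\frac{\prod_{j=-n}^{0}(b_j-c_j)(1-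\frac{b}{ab_jc_j})}{\prod_{j=-n}^{0}(b_j-d_j)(1-\frac{b}{ab_jd_j})}.$$
   Context: Products over integer ranges follow the convention: $\prod_{j=k}^{m}A_j=A_k\cdots A_m$ if $m\ge k$; $=1$ if $m=k-1$; $=(A_{m+1}\cdots A_{k-1})^{-1}$ if $m\le k-2$. The constants $a,b$ are distinct objects from the sequences $a_k,b_k$. *)

theory Defs
  imports Complex_Main
begin

definition gprod :: "(int \<Rightarrow> complex) \<Rightarrow> int \<Rightarrow> int \<Rightarrow> complex" where
  "gprod A k m =
     (if m \<ge> k then (\<Prod>j\<in>{k..m}. A j)
      else if m = k - 1 then 1
      else inverse (\<Prod>j\<in>{m+1..k-1}. A j))"

end

theory Submission
  imports Defs
begin

lemma key:
  fixes a b A B C D :: complex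
  assumes "a\<noteq>0" "B\<noteq>0" "C\<noteq>0" "D\<noteq>0"
  shows "(A + C) * (A + b / (a * C)) * ((B - D) * (1 - b / (a * B * D))) - (A + D) * (A + b / (a * D)) * ((B - C) * (1 - b / (a * B * C)))
   = (A + B) * (A + b / (a * B)) * (C - D) * (1 - b / (a * C * D))"
  using assms by (simp add: field_simps)

lemma gprod_step:
  assumes "k \<le> 0 \<Longrightarrow> A k \<noteq> 0"
  shows "gprod A 1 k = gprod A 1 (k-1) * A k"
proof (cases "k \<ge> 1")
  case True
  show ?thesis
  proof (cases "k = 1")
    case True then show ?thesis by (simp add: gprod_def)
  next
    case False
    then have "{1..k} = insert k {1..k-1}" using True by auto
    then show ?thesis using True False by (simp add: gprod_def mult.commute)
  qed
next
  case False
  then have nz: "A k \<noteq> 0" using assms by simp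
  show ?thesis
  proof (cases "k = 0")
    case True then show ?thesis using nz by (simp add: gprod_def)
  next
    case k0: False
    have "{k..0} = insert k {k+1..0}" using False k0 by auto
    then have "(\<Prod>j\<in>{k..0}. A j) = A k * (\<Prod>j\<in>{k+1..0}. A j)" by simp
    then show ?thesis using False k0 nz by (simp add: gprod_def)
  qed
qed

lemma gprod_nz:
  assumes "\<And>j. k < j \<Longrightarrow> j \<le> 0 \<Longrightarrow> A j \<noteq> 0" "\<And>j. 1 \<le> j \<Longrightarrow> j \<le> k \<Longrightarrow> A j \<noteq> 0"
  shows "gprod A 1 k \<noteq> 0"
  using assms by (auto simp add: gprod_def prod_zero_iff)

lemma telescope:
  fixes F :: "int \<Rightarrow> complex"
  assumes "m \<ge> -n - 1"
  shows "(\<Sum>k\<in>{-n..m}. F k - F (k-1)) = F m - F (-n-1)"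
  using assms
proof (induction m rule: int_ge_induct)
  case base
  then show ?case by simp
next
  case (step i)
  have "{-n..i+1} = insert (i+1) {-n..i}" using step by auto
  then show ?case using step by simp
qed

theorem corollary3p6:
  fixes a b :: complex
    and as bs cs ds :: "int \<Rightarrow> complex"
    and m n :: int
  assumes "a \<noteq> 0" and "b \<noteq> 0"
    and "\<And>i. as i \<noteq> 0" and "\<And>i. bs i \<noteq> 0"
    and "\<And>i. cs i \<noteq> 0" and "\<And>i. ds i \<noteq> 0"
    and "m \<ge> 0" and "n \<ge> 0"
    and "\<And>j. -n \<le> j \<Longrightarrow> j \<le> m \<Longrightarrow> (as j + cs j) * (as j + b / (a * cs j)) \<noteq> 0"
    and "\<And>j. -n \<le> j \<Longrightarrow> j \<le> m \<Longrightarrow> (as j + ds j) * (as j + b / (a * ds j)) \<noteq> 0"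
    and "\<And>j. -n \<le> j \<Longrightarrow> j \<le> m \<Longrightarrow> (bs j - cs j) * (1 - b / (a * bs j * cs j)) \<noteq> 0"
    and "\<And>j. -n \<le> j \<Longrightarrow> j \<le> m \<Longrightarrow> (bs j - ds j) * (1 - b / (a * bs j * ds j)) \<noteq> 0"
  shows
   "(let AC = (\<lambda>j. (as j + cs j) * (as j + b / (a * cs j)));
         AD = (\<lambda>j. (as j + ds j) * (as j + b / (a * ds j)));
         BC = (\<lambda>j. (bs j - cs j) * (1 - b / (a * bs j * cs j)));
         BD = (\<lambda>j. (bs j - ds j) * (1 - b / (a * bs j * ds j)))
     in (\<Sum>k\<in>{-n..m}. (as k + bs k) * (as k + b / (a * bs k)) * (cs k - ds k)
              * (1 - b / (a * cs k * ds k))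
              * (gprod AC 1 (k - 1) / gprod AD 1 k)
              * (gprod BD 1 (k - 1) / gprod BC 1 k))
        = (gprod AC 1 m / gprod AD 1 m) * (gprod BD 1 m / gprod BC 1 m)
          - (gprod AD (-n) 0 / gprod AC (-n) 0) * (gprod BC (-n) 0 / gprod BD (-n) 0))"
proof -
  define AC where "AC = (\<lambda>j. (as j + cs j) * (as j + b / (a * cs j)))"
  define AD where "AD = (\<lambda>j. (as j + ds j) * (as j + b / (a * ds j)))"
  define BC where "BC = (\<lambda>j. (bs j - cs j) * (1 - b / (a * bs j * cs j)))"
  define BD where "BD = (\<lambda>j. (bs j - ds j) * (1 - b / (a * bs j * ds j)))"
  define F where "F = (\<lambda>k. (gprod AC 1 k / gprod AD 1 k) * (gprod BD 1 k / gprod BC 1 k))"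
  have nzAC: "\<And>j. -n \<le> j \<Longrightarrow> j \<le> m \<Longrightarrow> AC j \<noteq> 0" using assms(9) unfolding AC_def by blast
  have nzAD: "\<And>j. -n \<le> j \<Longrightarrow> j \<le> m \<Longrightarrow> AD j \<noteq> 0" using assms(10) unfolding AD_def by blast
  have nzBC: "\<And>j. -n \<le> j \<Longrightarrow> j \<le> m \<Longrightarrow> BC j \<noteq> 0" using assms(11) unfolding BC_def by blast
  have nzBD: "\<And>j. -n \<le> j \<Longrightarrow> j \<le> m \<Longrightarrow> BD j \<noteq> 0" using assms(12) unfolding BD_def by blast
  have gnz: "gprod X 1 k \<noteq> 0" if "\<And>j. -n \<le> j \<Longrightarrow> j \<le> m \<Longrightarrow> X j \<noteq> 0" "-n-1 \<le> k" "k \<le> m" for X k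
    by (rule gprod_nz; use that assms(7,8) in force)
  have tm: "(as k + bs k) * (as k + b / (a * bs k)) * (cs k - ds k)
              * (1 - b / (a * cs k * ds k))
              * (gprod AC 1 (k - 1) / gprod AD 1 k)
              * (gprod BD 1 (k - 1) / gprod BC 1 k) = F k - F (k-1)"
    if k: "k \<in> {-n..m}" for k
  proof -
    have s1: "gprod AC 1 k = gprod AC 1 (k-1) * AC k" by (rule gprod_step) (use nzAC k in auto)
    have s2: "gprod AD 1 k = gprod AD 1 (k-1) * AD k" by (rule gprod_step) (use nzAD k in auto)
    have s3: "gprod BC 1 k = gprod BC 1 (k-1) * BC k" by (rule gprod_step) (use nzBC k in auto)
    have s4: "gprod BD 1 k = gprod BD 1 (k-1) * BD k" by (rule gprod_step) (use nzBD k in auto)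
    have n1: "gprod AD 1 (k-1) \<noteq> 0" "gprod BC 1 (k-1) \<noteq> 0"
      using gnz[OF nzAD] gnz[OF nzBC] k by auto
    have n2: "AD k \<noteq> 0" "BC k \<noteq> 0" using nzAD nzBC k by auto
    have K: "AC k * BD k - AD k * BC k = (as k + bs k) * (as k + b / (a * bs k)) * (cs k - ds k)
              * (1 - b / (a * cs k * ds k))"
      unfolding AC_def AD_def BC_def BD_def using key[OF assms(1) assms(4) assms(5) assms(6)] by simp
    show ?thesis unfolding F_def s1 s2 s3 s4 K[symmetric] using n1 n2
      by (simp add: field_simps)
  qed
  have "(\<Sum>k\<in>{-n..m}. (as k + bs k) * (as k + b / (a * bs k)) * (cs k - ds k)
              * (1 - b / (a * cs k * ds k))
              * (gprod AC 1 (k - 1) / gprod AD 1 k)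
              * (gprod BD 1 (k - 1) / gprod BC 1 k)) = (\<Sum>k\<in>{-n..m}. F k - F (k-1))"
    using tm by (rule sum.cong[OF refl])
  also have "\<dots> = F m - F (-n-1)" by (rule telescope) (use assms(7,8) in auto)
  also have "F (-n-1) = (gprod AD (-n) 0 / gprod AC (-n) 0) * (gprod BC (-n) 0 / gprod BD (-n) 0)"
    using assms(8) by (simp add: F_def gprod_def divide_inverse mult_ac)
  finally show ?thesis unfolding AC_def AD_def BC_def BD_def F_def Let_def by simp
qed

end
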